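(* Let $X$ be a connected finite $T_0$ topological space. Then $X$ has trivial shape, i.e. $X$ has the same shape as a one-point space.
   Context: Shape is meant in the sense of classical shape theory (Mardešić–Segal): the shape category $Sh$ is defined via $HPol$-expansions, where $HPol$ is the homotopy category of polyhedra. *)

theory Defs
  imports "HOL-Analysis.Analysis"
begin

definition abs_simplicial_complex :: "'v set set \<Rightarrow> bool" where
  "abs_simplicial_complex K \<longleftrightarrow>
     (\<forall>\<sigma>\<in>K. finite \<sigma> \<and> \<sigma> \<noteq> {} \<and> (\<forall>\<tau>. \<tau> \<subseteq> \<sigma> \<and> \<tau> \<noteq> {} \<longrightarrow> \<tau> \<in> K))"

definition geom_simplex :: "'v set \<Rightarrow> ('v \<Rightarrow> real) set" where
  "geom_simplex \<sigma> = {\<alpha>. (\<forall>v. 0 \<le> \<alpha> v) \<and> (\<forall>v. v \<notin> \<sigma> \<longrightarrow> \<alpha> v = 0) \<and> sum \<alpha> \<sigma> = 1}"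

definition realization_carrier :: "'v set set \<Rightarrow> ('v \<Rightarrow> real) set" where
  "realization_carrier K = (\<Union>\<sigma>\<in>K. geom_simplex \<sigma>)"

text \<open>Each closed simplex carries its Euclidean topology (subspace of the product
  topology; coordinates outside the finite simplex vanish), and the polyhedron |K|
  carries the weak (CW / Whitehead) topology coherent with its closed simplices.\<close>
definition polyhedron_top :: "'v set set \<Rightarrow> ('v \<Rightarrow> real) topology" where
  "polyhedron_top K = topology (\<lambda>U. U \<subseteq> realization_carrier K \<and>
      (\<forall>\<sigma>\<in>K. openin (subtopology (powertop_real UNIV) (geom_simplex \<sigma>))
                       (U \<inter> geom_simplex \<sigma>)))"

text \<open>Objects of HPol: spaces having the homotopy type of a polyhedron (whose vertices
  are taken in the type 'v; the theorem quantifies over all types).\<close>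
definition in_HPol :: "'p topology \<Rightarrow> 'v itself \<Rightarrow> bool" where
  "in_HPol P (_::'v itself) \<longleftrightarrow>
     (\<exists>K::'v set set. abs_simplicial_complex K \<and> P homotopy_equivalent_space polyhedron_top K)"

definition point_space :: "unit topology" where
  "point_space = discrete_topology {()}"

text \<open>X has trivial shape (Sh X = Sh pt): the morphism p : X \<rightarrow> (pt) into the
  rudimentary inverse system consisting of the one-point space is an HPol-expansion,
  i.e. satisfies the Mardesic-Segal conditions (E1) and (E2) for every P in HPol.
  Since (pt) is itself the HPol-expansion of the one-point space, this says X and
  the one-point space have isomorphic HPol-expansions.\<close>
definition has_trivial_shape :: "'a topology \<Rightarrow> 'p itself \<Rightarrow> 'v itself \<Rightarrow> bool" where
  "has_trivial_shape X (_::'p itself) (_::'v itself) \<longleftrightarrow>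
     (\<forall>P::'p topology. in_HPol P TYPE('v) \<longrightarrow>
        (\<forall>h. continuous_map X P h \<longrightarrow>
             (\<exists>f. continuous_map point_space P f \<and>
                  homotopic_with (\<lambda>_. True) X P h (f \<circ> (\<lambda>_. ())))) \<and>
        (\<forall>f f'. continuous_map point_space P f \<and> continuous_map point_space P f' \<and>
             homotopic_with (\<lambda>_. True) X P (f \<circ> (\<lambda>_. ())) (f' \<circ> (\<lambda>_. ())) \<longrightarrow>
             homotopic_with (\<lambda>_. True) point_space P f f'))"

end

theory Submission
  imports Defs
begin

lemma poly_istop: "istopology (\<lambda>U. U \<subseteq> realization_carrier K \<and>
      (\<forall>\<sigma>\<in>K. openin (subtopology (powertop_real UNIV) (geom_simplex \<sigma>))
                       (U \<inter> geom_simplex \<sigma>)))"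
  unfolding istopology_def
proof (rule conjI; (intro allI impI))
  fix S T :: "('a \<Rightarrow> real) set"
  assume a1: "S \<subseteq> realization_carrier K \<and> (\<forall>\<sigma>\<in>K. openin (subtopology (powertop_real UNIV) (geom_simplex \<sigma>)) (S \<inter> geom_simplex \<sigma>))"
  assume a2: "T \<subseteq> realization_carrier K \<and> (\<forall>\<sigma>\<in>K. openin (subtopology (powertop_real UNIV) (geom_simplex \<sigma>)) (T \<inter> geom_simplex \<sigma>))"
  have "\<And>\<sigma>. S \<inter> T \<inter> geom_simplex \<sigma> = (S \<inter> geom_simplex \<sigma>) \<inter> (T \<inter> geom_simplex \<sigma>)" by blast
  with a1 a2 show "S \<inter> T \<subseteq> realization_carrier K \<and> (\<forall>\<sigma>\<in>K. openin (subtopology (powertop_real UNIV) (geom_simplex \<sigma>)) (S \<inter> T \<inter> geom_simplex \<sigma>))"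
    by (auto intro: openin_Int)
next
  fix \<K> :: "('a \<Rightarrow> real) set set"
  assume a: "\<forall>S\<in>\<K>. S \<subseteq> realization_carrier K \<and> (\<forall>\<sigma>\<in>K. openin (subtopology (powertop_real UNIV) (geom_simplex \<sigma>)) (S \<inter> geom_simplex \<sigma>))"
  have "openin (subtopology (powertop_real UNIV) (geom_simplex \<sigma>)) (\<Union>\<K> \<inter> geom_simplex \<sigma>)"
    if s: "\<sigma> \<in> K" for \<sigma>
  proof -
    have eq: "\<Union>\<K> \<inter> geom_simplex \<sigma> = \<Union>((\<lambda>S. S \<inter> geom_simplex \<sigma>) ` \<K>)" by blast
    have "openin (subtopology (powertop_real UNIV) (geom_simplex \<sigma>)) (\<Union>((\<lambda>S. S \<inter> geom_simplex \<sigma>) ` \<K>))"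
    proof (rule openin_Union)
      fix U assume "U \<in> (\<lambda>S. S \<inter> geom_simplex \<sigma>) ` \<K>"
      then obtain S where S: "S \<in> \<K>" "U = S \<inter> geom_simplex \<sigma>" by blast
      show "openin (subtopology (powertop_real UNIV) (geom_simplex \<sigma>)) U"
        using a S s by blast
    qed
    then show ?thesis unfolding eq .
  qed
  with a show "\<Union>\<K> \<subseteq> realization_carrier K \<and> (\<forall>\<sigma>\<in>K. openin (subtopology (powertop_real UNIV) (geom_simplex \<sigma>)) (\<Union>\<K> \<inter> geom_simplex \<sigma>))"
    by blast
qed

lemma poly_openin: "openin (polyhedron_top K) U \<longleftrightarrow> U \<subseteq> realization_carrier K \<and>
      (\<forall>\<sigma>\<in>K. openin (subtopology (powertop_real UNIV) (geom_simplex \<sigma>))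
                       (U \<inter> geom_simplex \<sigma>))"
  unfolding polyhedron_top_def topology_inverse'[OF poly_istop] ..

lemma poly_topspace: "topspace (polyhedron_top K) = realization_carrier K"
proof -
  have "openin (polyhedron_top K) (realization_carrier K)"
    unfolding poly_openin
  proof (intro conjI ballI subset_refl)
    fix \<sigma> assume "\<sigma> \<in> K"
    then have "realization_carrier K \<inter> geom_simplex \<sigma> = geom_simplex \<sigma>"
      unfolding realization_carrier_def by blast
    then show "openin (subtopology (powertop_real UNIV) (geom_simplex \<sigma>)) (realization_carrier K \<inter> geom_simplex \<sigma>)"
      using openin_topspace[of "subtopology (powertop_real UNIV) (geom_simplex \<sigma>)"] by simp
  qed
  moreover have "topspace (polyhedron_top K) \<subseteq> realization_carrier K"
    using poly_openin openin_topspace by blast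
  ultimately show ?thesis using openin_subset by blast
qed

lemma poly_t1: "t1_space (polyhedron_top K)"
  unfolding t1_space_def
proof (intro ballI impI)
  fix x y assume x: "x \<in> topspace (polyhedron_top K)" and y: "y \<in> topspace (polyhedron_top K)" and "x \<noteq> y"
  have t1: "t1_space (powertop_real (UNIV::'a set))"
    by (simp add: t1_space_product_topology t1_space_euclidean)
  have o: "openin (powertop_real (UNIV::'a set)) (UNIV - {y})"
  proof -
    have "closedin (powertop_real (UNIV::'a set)) {y}"
      using t1 closedin_t1_singleton by fastforce
    then show ?thesis by (simp add: closedin_def)
  qed
  have "openin (polyhedron_top K) (realization_carrier K - {y})"
    unfolding poly_openin
  proof (intro conjI ballI)
    fix \<sigma> assume "\<sigma> \<in> K"
    have "(realization_carrier K - {y}) \<inter> geom_simplex \<sigma> = geom_simplex \<sigma> \<inter> (UNIV - {y})"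
      using \<open>\<sigma> \<in> K\<close> unfolding realization_carrier_def by blast
    then show "openin (subtopology (powertop_real UNIV) (geom_simplex \<sigma>)) ((realization_carrier K - {y}) \<inter> geom_simplex \<sigma>)"
      using openin_subtopology_Int2[OF o] by simp
  qed auto
  then show "\<exists>U. openin (polyhedron_top K) U \<and> x \<in> U \<and> y \<notin> U"
    using x \<open>x \<noteq> y\<close> poly_topspace by blast
qed

lemma const_map:
  assumes "t1_space Y" "continuous_map X Y h" "connected_space X" "finite (topspace X)"
    "topspace X \<noteq> {}"
  obtains c where "c \<in> topspace Y" "\<And>x. x \<in> topspace X \<Longrightarrow> h x = c"
proof -
  let ?S = "h ` topspace X"
  have cS: "connectedin Y ?S"
    by (rule connectedin_continuous_map_image[OF assms(2)]) (simp add: connectedin_topspace assms(3))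
  have sub: "?S \<subseteq> topspace Y"
    using cS by (simp add: connectedin_def)
  have c1: "connected_space (subtopology Y ?S)"
    using cS by (simp add: connectedin_def)
  have c2: "t1_space (subtopology Y ?S)" by (rule t1_space_subtopology[OF assms(1)])
  have tS: "topspace (subtopology Y ?S) = ?S" using sub by auto
  have c3: "finite (topspace (subtopology Y ?S))" unfolding tS using assms(4) by simp
  have "\<exists>a. topspace (subtopology Y ?S) \<subseteq> {a}"
    using connected_space_imp_infinite_gen[OF c1 c2] c3 by blast
  then obtain a where "?S \<subseteq> {a}" unfolding tS by blast
  moreover obtain x0 where "x0 \<in> topspace X" using assms(5) by blast
  ultimately have "\<And>x. x \<in> topspace X \<Longrightarrow> h x = h x0" by blast
  moreover have "h x0 \<in> topspace Y" using sub \<open>x0 \<in> topspace X\<close> by blast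
  ultimately show ?thesis using that by blast
qed

theorem proposition2p1:
  fixes X :: "'a topology"
  assumes "finite (topspace X)"
    and "t0_space X"
    and "connected_space X"
    and "topspace X \<noteq> {}"
  shows "has_trivial_shape X TYPE('p) TYPE('v)"
  unfolding has_trivial_shape_def
proof (intro allI impI conjI)
  fix P :: "'p topology"
  assume "in_HPol P TYPE('v)"
  then obtain K :: "'v set set" where "P homotopy_equivalent_space polyhedron_top K"
    unfolding in_HPol_def by blast
  then obtain g k where g: "continuous_map P (polyhedron_top K) g"
    and k: "continuous_map (polyhedron_top K) P k"
    and kg: "homotopic_with (\<lambda>x. True) P P (k \<circ> g) id"
    unfolding homotopy_equivalent_space_def by blast
  have pt: "topspace point_space = {()}" unfolding point_space_def by simp
  {
    fix h assume h: "continuous_map X P h"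
    obtain c where c: "c \<in> topspace (polyhedron_top K)" "\<And>x. x \<in> topspace X \<Longrightarrow> g (h x) = c"
      using const_map[OF poly_t1 continuous_map_compose[OF h g] assms(3,1,4)] by auto
    have "homotopic_with (\<lambda>_. True) X P ((k \<circ> g) \<circ> h) (id \<circ> h)"
      by (rule homotopic_with_compose_continuous_map_right[OF kg h]) auto
    then have h1: "homotopic_with (\<lambda>_. True) X P h ((k \<circ> g) \<circ> h)"
      by (simp add: homotopic_with_symD)
    have kc: "k c \<in> topspace P" using continuous_map_image_subset_topspace[OF k] c(1) by blast
    have "homotopic_with (\<lambda>_. True) X P ((k \<circ> g) \<circ> h) (\<lambda>x. k c)"
    proof (rule homotopic_with_equal)
      show "continuous_map X P ((k \<circ> g) \<circ> h)"
        by (rule continuous_map_compose[OF h continuous_map_compose[OF g k]])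
      show "((k \<circ> g) \<circ> h) x = k c" if "x \<in> topspace X" for x
        using c(2)[OF that] by simp
    qed auto
    then have "homotopic_with (\<lambda>_. True) X P h (\<lambda>x. k c)"
      using h1 homotopic_with_trans by blast
    moreover have "continuous_map point_space P (\<lambda>_. k c)"
      using kc by simp
    ultimately show "\<exists>f. continuous_map point_space P f \<and> homotopic_with (\<lambda>_. True) X P h (f \<circ> (\<lambda>_. ()))"
      by (intro exI[of _ "\<lambda>_. k c"]) (simp add: o_def)
  }
  fix f f' :: "unit \<Rightarrow> 'p"
  assume a: "continuous_map point_space P f \<and> continuous_map point_space P f' \<and>
       homotopic_with (\<lambda>_. True) X P (f \<circ> (\<lambda>_. ())) (f' \<circ> (\<lambda>_. ()))"
  have "X \<noteq> trivial_topology" using assms(4) by auto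
  then have "path_component_of P (f ()) (f' ())"
    using a homotopic_constant_maps[of X P "f ()" "f' ()"] by (simp add: o_def)
  moreover have "point_space \<noteq> trivial_topology"
  proof
    assume "point_space = trivial_topology"
    then have "topspace point_space = {}" by simp
    with pt show False by simp
  qed
  ultimately have "homotopic_with (\<lambda>_. True) point_space P (\<lambda>_. f ()) (\<lambda>_. f' ())"
    using homotopic_constant_maps[of point_space P "f ()" "f' ()"] by simp
  moreover have e1: "(\<lambda>_. f ()) = f" by (rule ext) simp
  moreover have e2: "(\<lambda>_. f' ()) = f'" by (rule ext) simp
  ultimately show "homotopic_with (\<lambda>_. True) point_space P f f'" by simp
qed

end
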